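(* Let $\{\boldsymbol{Y}_n\}=\{(X_{1,n},X_{2,n},J_n)\}$ be a two-dimensional skip-free Markov modulated random walk as described in the context, which is irreducible and aperiodic. If $a_1<0$ or $a_2<0$, then for every $\boldsymbol{y}\in\mathbb{S}_+$ the occupation measure $(\tilde q_{\boldsymbol{y},\boldsymbol{y}'};\boldsymbol{y}'\in\mathbb{S}_+)$ is finite, i.e. $$\sum_{\boldsymbol{y}'\in\mathbb{S}_+}\tilde q_{\boldsymbol{y},\boldsymbol{y}'}=\mathbb{E}(\tau\mid \boldsymbol{Y}_0=\boldsymbol{y})<\infty .$$
   Context: Let $S_0=\{1,\dots,s_0\}$ be a finite set. The process $\{\boldsymbol{Y}_n\}=\{(X_{1,n},X_{2,n},J_n)\}$ is a discrete-time Markov chain on $\mathbb{S}=\mathbb{Z}^2\times S_0$ with space-homogeneous skip-free transitions: there are nonnegative $s_0\times s_0$ matrices $A_{k,l}$, $k,l\in\{-1,0,1\}$, with $\sum_{k,l}A_{k,l}$ stochastic, such that $\mathbb{P}(\boldsymbol{Y}_{n+1}=(x_1+k,x_2+l,j')\mid\boldsymbol{Y}_n=(x_1,x_2,j))=[A_{k,l}]_{j,j'}$ for all $(x_1,x_2)\in\mathbb{Z}^2$, $k,l\in\{-1,0,1\}$, $j,j'\in S_0$ (all other transitions have probability $0$). Let $\mathbb{Z}_+$ be the nonnegative integers, $\mathbb{S}_+=\mathbb{Z}_+^2\times S_0$, $\tau=\inf\{n\ge 0:\boldsymbol{Y}_n\in\mathbb{S}\setminus\mathbb{S}_+\}$,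 and for $\boldsymbol{y},\boldsymbol{y}'\in\mathbb{S}_+$, $\tilde q_{\boldsymbol{y},\boldsymbol{y}'}=\mathbb{E}\big(\sum_{n=0}^{\tau-1}1(\boldsymbol{Y}_n=\boldsymbol{y}')\mid\boldsymbol{Y}_0=\boldsymbol{y}\big)$. Let $A_{*,*}=\sum_{k,l}A_{k,l}$ (the transition matrix of the background process), $\boldsymbol{\pi}_{*,*}$ its stationary distribution, $A_{i,*}=\sum_{k}A_{i,k}$, $A_{*,j}=\sum_k A_{k,j}$, and define $a_1=\boldsymbol{\pi}_{*,*}(-A_{-1,*}+A_{1,*})\mathbf{1}$, $a_2=\boldsymbol{\pi}_{*,*}(-A_{*,-1}+A_{*,1})\mathbf{1}$, where $\mathbf 1$ is the all-ones column vector. *)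

theory Defs
  imports "HOL-Analysis.Analysis"
begin

text \<open>States of the Markov modulated random walk: (x1, x2, j) with x1, x2 integers
  and background phase j in S0 = {1..s0}.  The transition matrices are encoded as
  A :: int => int => nat => nat => real, where A k l j j' is the (j,j') entry of A_{k,l}.\<close>

type_synonym state = "int \<times> int \<times> nat"

definition S_all :: "nat \<Rightarrow> state set" where
  "S_all s0 = {(x1, x2, j). j \<in> {1..s0}}"

definition S_plus :: "nat \<Rightarrow> state set" where
  "S_plus s0 = {(x1, x2, j). 0 \<le> x1 \<and> 0 \<le> x2 \<and> j \<in> {1..s0}}"

definition trans :: "nat \<Rightarrow> (int \<Rightarrow> int \<Rightarrow> nat \<Rightarrow> nat \<Rightarrow> real) \<Rightarrow> state \<Rightarrow> state \<Rightarrow> real" where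
  "trans s0 A y y' = (case y of (x1, x2, j) \<Rightarrow> case y' of (x1', x2', j') \<Rightarrow>
     (if \<bar>x1' - x1\<bar> \<le> 1 \<and> \<bar>x2' - x2\<bar> \<le> 1 \<and> j \<in> {1..s0} \<and> j' \<in> {1..s0}
      then A (x1' - x1) (x2' - x2) j j' else 0))"

definition nbrs :: "nat \<Rightarrow> state \<Rightarrow> state set" where
  "nbrs s0 y = (case y of (x1, x2, j) \<Rightarrow>
     {(x1 + k, x2 + l, j') | k l j'. k \<in> {-1, 0, 1} \<and> l \<in> {-1, 0, 1} \<and> j' \<in> {1..s0}})"

fun nstep :: "nat \<Rightarrow> (int \<Rightarrow> int \<Rightarrow> nat \<Rightarrow> nat \<Rightarrow> real) \<Rightarrow> nat \<Rightarrow> state \<Rightarrow> state \<Rightarrow> real" where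
  "nstep s0 A 0 y y' = (if y = y' then 1 else 0)"
| "nstep s0 A (Suc n) y y' = (\<Sum>z\<in>nbrs s0 y. trans s0 A y z * nstep s0 A n z y')"

text \<open>Taboo n-step probabilities P(Y_1,...,Y_n in S_+, Y_n = y' | Y_0 = y), for y in S_+,
  i.e. P(Y_n = y', tau > n | Y_0 = y).\<close>
fun taboo :: "nat \<Rightarrow> (int \<Rightarrow> int \<Rightarrow> nat \<Rightarrow> nat \<Rightarrow> real) \<Rightarrow> nat \<Rightarrow> state \<Rightarrow> state \<Rightarrow> real" where
  "taboo s0 A 0 y y' = (if y = y' then 1 else 0)"
| "taboo s0 A (Suc n) y y' = (\<Sum>z\<in>nbrs s0 y \<inter> S_plus s0. trans s0 A y z * taboo s0 A n z y')"

text \<open>Occupation measure q~_{y,y'} = E(sum_{n<tau} 1(Y_n = y') | Y_0 = y)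
  = sum_n P(Y_n = y', tau > n | Y_0 = y)  (valued in [0, \<infinity>]).\<close>
definition qtilde :: "nat \<Rightarrow> (int \<Rightarrow> int \<Rightarrow> nat \<Rightarrow> nat \<Rightarrow> real) \<Rightarrow> state \<Rightarrow> state \<Rightarrow> ennreal" where
  "qtilde s0 A y y' = (\<Sum>n. ennreal (taboo s0 A n y y'))"

definition irreducible_chain :: "nat \<Rightarrow> (int \<Rightarrow> int \<Rightarrow> nat \<Rightarrow> nat \<Rightarrow> real) \<Rightarrow> bool" where
  "irreducible_chain s0 A \<longleftrightarrow>
     (\<forall>y\<in>S_all s0. \<forall>y'\<in>S_all s0. \<exists>n. nstep s0 A n y y' > 0)"

definition aperiodic_chain :: "nat \<Rightarrow> (int \<Rightarrow> int \<Rightarrow> nat \<Rightarrow> nat \<Rightarrow> real) \<Rightarrow> bool" where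
  "aperiodic_chain s0 A \<longleftrightarrow>
     (\<forall>y\<in>S_all s0. Gcd {n. 0 < n \<and> nstep s0 A n y y > 0} = 1)"

definition Astar :: "(int \<Rightarrow> int \<Rightarrow> nat \<Rightarrow> nat \<Rightarrow> real) \<Rightarrow> nat \<Rightarrow> nat \<Rightarrow> real" where
  "Astar A j j' = (\<Sum>k\<in>{-1,0,1}. \<Sum>l\<in>{-1,0,1}. A k l j j')"

definition drift1 :: "nat \<Rightarrow> (int \<Rightarrow> int \<Rightarrow> nat \<Rightarrow> nat \<Rightarrow> real) \<Rightarrow> (nat \<Rightarrow> real) \<Rightarrow> real" where
  "drift1 s0 A \<pi> = (\<Sum>j\<in>{1..s0}. \<pi> j * (\<Sum>j'\<in>{1..s0}. \<Sum>l\<in>{-1,0,1}. A 1 l j j' - A (-1) l j j'))"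

definition drift2 :: "nat \<Rightarrow> (int \<Rightarrow> int \<Rightarrow> nat \<Rightarrow> nat \<Rightarrow> real) \<Rightarrow> (nat \<Rightarrow> real) \<Rightarrow> real" where
  "drift2 s0 A \<pi> = (\<Sum>j\<in>{1..s0}. \<pi> j * (\<Sum>j'\<in>{1..s0}. \<Sum>k\<in>{-1,0,1}. A k 1 j j' - A k (-1) j j'))"

end

theory Submission
  imports Defs
begin

lemma trans_nonneg:
  assumes A_nonneg: "\<And>k l j j'. k \<in> {-1,0,1} \<Longrightarrow> l \<in> {-1,0,1} \<Longrightarrow> j \<in> {1..s0} \<Longrightarrow>
                     j' \<in> {1..s0} \<Longrightarrow> 0 \<le> A k l j j'"
  shows "0 \<le> trans s0 A y z"
proof -
  obtain x1 x2 j where y: "y = (x1,x2,j)" by (cases y) auto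
  obtain x1' x2' j' where z: "z = (x1',x2',j')" by (cases z) auto
  have h: "\<bar>a\<bar> \<le> 1 \<Longrightarrow> a \<in> {-1,0,1}" for a :: int by auto
  show ?thesis unfolding y z trans_def using A_nonneg[of "x1'-x1" "x2'-x2" j j'] h[of "x1'-x1"] h[of "x2'-x2"] by auto
qed

lemma taboo_nonneg:
  assumes "\<And>y z. 0 \<le> trans s0 A y z"
  shows "0 \<le> taboo s0 A n y y'"
  using assms by (induction n arbitrary: y) (auto intro!: sum_nonneg)

lemma finite_nbrs: "finite (nbrs s0 y)"
proof -
  obtain x1 x2 j where y: "y = (x1,x2,j)" by (cases y) auto
  have "nbrs s0 y = (\<lambda>(k,l,j'). (x1+k,x2+l,j')) ` ({-1,0,1} \<times> {-1,0,1} \<times> {1..s0})"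
    unfolding y nbrs_def by (auto simp: image_iff)
  then show ?thesis by simp
qed

lemma real_bound:
  assumes tn: "\<And>y z. 0 \<le> trans s0 A y z"
    and eps: "\<epsilon> > 0"
    and dr: "\<And>y. y \<in> S_plus s0 \<Longrightarrow> \<epsilon> + (\<Sum>z\<in>nbrs s0 y \<inter> S_plus s0. trans s0 A y z * f z) \<le> f y"
    and F: "finite F" and fnn: "\<And>y. y \<in> S_plus s0 \<Longrightarrow> 0 \<le> f y"
  shows "y \<in> S_plus s0 \<Longrightarrow> \<epsilon> * (\<Sum>n<N. \<Sum>y'\<in>F. taboo s0 A n y y') \<le> f y"
proof (induction N arbitrary: y)
  case 0
  then show ?case using fnn by simp
next
  case (Suc N)
  let ?Z = "nbrs s0 y \<inter> S_plus s0"
  have fz: "finite ?Z" using finite_nbrs by blast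
  have "(\<Sum>n<Suc N. \<Sum>y'\<in>F. taboo s0 A n y y') = (\<Sum>y'\<in>F. taboo s0 A 0 y y') + (\<Sum>n<N. \<Sum>y'\<in>F. taboo s0 A (Suc n) y y')"
    by (rule sum.lessThan_Suc_shift)
  also have "(\<Sum>y'\<in>F. taboo s0 A 0 y y') \<le> 1"
    using F by (simp add: sum.delta)
  also have "(\<Sum>n<N. \<Sum>y'\<in>F. taboo s0 A (Suc n) y y') = (\<Sum>z\<in>?Z. trans s0 A y z * (\<Sum>n<N. \<Sum>y'\<in>F. taboo s0 A n z y'))"
    by (simp add: sum_distrib_left sum.swap[of _ ?Z])
  finally have le: "(\<Sum>n<Suc N. \<Sum>y'\<in>F. taboo s0 A n y y') \<le> 1 + (\<Sum>z\<in>?Z. trans s0 A y z * (\<Sum>n<N. \<Sum>y'\<in>F. taboo s0 A n z y'))"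
    by simp
  have "\<epsilon> * (\<Sum>z\<in>?Z. trans s0 A y z * (\<Sum>n<N. \<Sum>y'\<in>F. taboo s0 A n z y')) = (\<Sum>z\<in>?Z. trans s0 A y z * (\<epsilon> * (\<Sum>n<N. \<Sum>y'\<in>F. taboo s0 A n z y')))"
    by (simp add: sum_distrib_left mult.left_commute)
  also have "\<dots> \<le> (\<Sum>z\<in>?Z. trans s0 A y z * f z)"
    by (intro sum_mono mult_left_mono tn) (use Suc.IH in auto)
  moreover have "\<epsilon> * (\<Sum>n<Suc N. \<Sum>y'\<in>F. taboo s0 A n y y') \<le> \<epsilon> * (1 + (\<Sum>z\<in>?Z. trans s0 A y z * (\<Sum>n<N. \<Sum>y'\<in>F. taboo s0 A n z y')))"
    using le eps by (intro mult_left_mono) auto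
  ultimately have "\<epsilon> * (\<Sum>n<Suc N. \<Sum>y'\<in>F. taboo s0 A n y y') \<le> \<epsilon> + (\<Sum>z\<in>?Z. trans s0 A y z * f z)"
    by (simp add: distrib_left)
  then show ?case using dr[OF Suc.prems] by linarith
qed

lemma occupation_finite:
  assumes tn: "\<And>y z. 0 \<le> trans s0 A y z"
    and eps: "\<epsilon> > 0"
    and dr: "\<And>y. y \<in> S_plus s0 \<Longrightarrow> \<epsilon> + (\<Sum>z\<in>nbrs s0 y \<inter> S_plus s0. trans s0 A y z * f z) \<le> f y"
    and fnn: "\<And>y. y \<in> S_plus s0 \<Longrightarrow> 0 \<le> f y"
    and y: "y \<in> S_plus s0"
  shows "(\<Sum>\<^sub>\<infinity>y'\<in>S_plus s0. qtilde s0 A y y') < \<infinity>"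
proof -
  have tb: "0 \<le> taboo s0 A n y y'" for n y y' by (rule taboo_nonneg[OF tn])
  have "(\<Sum>\<^sub>\<infinity>y'\<in>S_plus s0. qtilde s0 A y y') = (SUP F\<in>{F. finite F \<and> F\<subseteq>S_plus s0}. sum (qtilde s0 A y) F)"
    by (rule nonneg_infsum_complete) simp
  also have "\<dots> \<le> ennreal (f y / \<epsilon>)"
  proof (rule SUP_least)
    fix F assume "F \<in> {F. finite F \<and> F\<subseteq>S_plus s0}"
    then have F: "finite F" by simp
    have "sum (qtilde s0 A y) F = (\<Sum>n. \<Sum>y'\<in>F. ennreal (taboo s0 A n y y'))"
      unfolding qtilde_def by (rule suminf_sum[symmetric]) simp
    also have "\<dots> \<le> ennreal (f y / \<epsilon>)"
    proof (rule suminf_le_const)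
      fix N
      have "(\<Sum>n<N. \<Sum>y'\<in>F. ennreal (taboo s0 A n y y')) = ennreal (\<Sum>n<N. \<Sum>y'\<in>F. taboo s0 A n y y')"
        using tb by (simp add: sum_nonneg)
      also have "\<dots> \<le> ennreal (f y / \<epsilon>)"
        using real_bound[OF tn eps dr F fnn y, of N] eps
        by (intro ennreal_leI) (simp add: field_simps)
      finally show "(\<Sum>n<N. \<Sum>y'\<in>F. ennreal (taboo s0 A n y y')) \<le> ennreal (f y / \<epsilon>)" .
    qed simp
    finally show "sum (qtilde s0 A y) F \<le> ennreal (f y / \<epsilon>)" .
  qed
  finally show ?thesis by (simp add: le_less_trans)
qed


lemma nbrs_eq: "nbrs s0 (x1,x2,j) = (\<lambda>(k,l,j'). (x1+k,x2+l,j')) ` ({-1,0,1} \<times> {-1,0,1} \<times> {1..s0})"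
  unfolding nbrs_def by (auto simp: image_iff)

lemma sum_nbrs:
  assumes j: "j \<in> {1..s0}"
  shows "(\<Sum>z\<in>nbrs s0 (x1,x2,j). trans s0 A (x1,x2,j) z * F z) =
    (\<Sum>k\<in>{-1,0,1}. \<Sum>l\<in>{-1,0,1}. \<Sum>j'\<in>{1..s0}. A k l j j' * F (x1+k,x2+l,j'))"
proof -
  let ?g = "\<lambda>(k::int,l::int,j'::nat). (x1+k,x2+l,j')"
  have inj: "inj_on ?g ({-1,0,1} \<times> {-1,0,1} \<times> {1..s0})" by (auto simp: inj_on_def)
  have "(\<Sum>z\<in>nbrs s0 (x1,x2,j). trans s0 A (x1,x2,j) z * F z) =
     (\<Sum>(k,l,j')\<in>{-1,0,1} \<times> {-1,0,1} \<times> {1..s0}. trans s0 A (x1,x2,j) (x1+k,x2+l,j') * F (x1+k,x2+l,j'))"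
    unfolding nbrs_eq by (subst sum.reindex[OF inj]) (simp add: case_prod_beta)
  also have "\<dots> = (\<Sum>(k,l,j')\<in>{-1,0,1} \<times> {-1,0,1} \<times> {1..s0}. A k l j j' * F (x1+k,x2+l,j'))"
  proof (rule sum.cong[OF refl])
    fix x assume "x \<in> {-1,0,1::int} \<times> {-1,0,1::int} \<times> {1..s0}"
    then obtain k l :: int and j' :: nat where x: "x = (k,l,j')" and k: "k \<in> {-1,0,1}" and l: "l \<in> {-1,0,1}" and j': "j' \<in> {1..s0}"
      by auto
    have "\<bar>k\<bar> \<le> 1" "\<bar>l\<bar> \<le> 1" using k l by auto
    then have "trans s0 A (x1,x2,j) (x1+k,x2+l,j') = A k l j j'"
      using j j' unfolding trans_def by simp
    then show "(case x of (k,l,j') \<Rightarrow> trans s0 A (x1,x2,j) (x1+k,x2+l,j') * F (x1+k,x2+l,j')) =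
       (case x of (k,l,j') \<Rightarrow> A k l j j' * F (x1+k,x2+l,j'))" by (simp add: x)
  qed
  also have "\<dots> = (\<Sum>k\<in>{-1,0,1}. \<Sum>l\<in>{-1,0,1}. \<Sum>j'\<in>{1..s0}. A k l j j' * F (x1+k,x2+l,j'))"
    by (simp add: sum.cartesian_product)
  finally show ?thesis .
qed

lemma sum_swap3:
  "(\<Sum>k\<in>{-1,0,1}. \<Sum>l\<in>{-1,0,1}. \<Sum>j'\<in>{1..s0}. A k l j j' * X j') = (\<Sum>j'\<in>{1..s0}. Astar A j j' * X j')"
  unfolding Astar_def sum_distrib_right
  by (simp add: sum.distrib)


definition Pop :: "nat \<Rightarrow> (int \<Rightarrow> int \<Rightarrow> nat \<Rightarrow> nat \<Rightarrow> real) \<Rightarrow> (nat \<Rightarrow> real) \<Rightarrow> nat \<Rightarrow> real" where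
  "Pop s0 A v j = (\<Sum>i\<in>{1..s0}. Astar A j i * v i)"

locale bg =
  fixes s0 :: nat and A :: "int \<Rightarrow> int \<Rightarrow> nat \<Rightarrow> nat \<Rightarrow> real" and \<pi> :: "nat \<Rightarrow> real"
  assumes s0_pos: "1 \<le> s0"
    and A_nonneg: "\<And>k l j j'. k \<in> {-1,0,1} \<Longrightarrow> l \<in> {-1,0,1} \<Longrightarrow> j \<in> {1..s0} \<Longrightarrow>
                     j' \<in> {1..s0} \<Longrightarrow> 0 \<le> A k l j j'"
    and A_stoch: "\<And>j. j \<in> {1..s0} \<Longrightarrow> (\<Sum>j'\<in>{1..s0}. Astar A j j') = 1"
    and pi_nonneg: "\<And>j. j \<in> {1..s0} \<Longrightarrow> 0 \<le> \<pi> j"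
    and pi_sum: "(\<Sum>j\<in>{1..s0}. \<pi> j) = 1"
    and pi_stat: "\<And>j'. j' \<in> {1..s0} \<Longrightarrow> (\<Sum>j\<in>{1..s0}. \<pi> j * Astar A j j') = \<pi> j'"
    and irred: "irreducible_chain s0 A"
begin

abbreviation "R \<equiv> {1..s0}"
abbreviation "P \<equiv> Pop s0 A"

lemma Astar_nonneg: "j \<in> R \<Longrightarrow> i \<in> R \<Longrightarrow> 0 \<le> Astar A j i"
  unfolding Astar_def by (intro sum_nonneg A_nonneg) auto

lemma Pop_cong: "(\<And>i. i \<in> R \<Longrightarrow> v i = w i) \<Longrightarrow> P v j = P w j"
  unfolding Pop_def by (intro sum.cong) auto

lemma Pop_lin: "P (\<lambda>i. a * v i + b * w i) j = a * P v j + b * P w j"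
  unfolding Pop_def by (simp add: algebra_simps sum.distrib sum_distrib_left)

lemma Pop_diff: "P (\<lambda>i. v i - w i) j = P v j - P w j"
  unfolding Pop_def by (simp add: algebra_simps sum_subtractf)

lemma Pop_scale: "P (\<lambda>i. a * v i) j = a * P v j"
  unfolding Pop_def by (simp add: algebra_simps sum_distrib_left)

lemma Pop_sum: "P (\<lambda>i. \<Sum>t\<in>T. F t i) j = (\<Sum>t\<in>T. P (F t) j)"
  unfolding Pop_def by (simp add: sum_distrib_left sum.swap[of _ T])

lemma Pop_const: "j \<in> R \<Longrightarrow> P (\<lambda>_. c) j = c"
  unfolding Pop_def using A_stoch by (simp add: sum_distrib_right[symmetric])

lemma Pop_mono: "(\<And>i. i \<in> R \<Longrightarrow> v i \<le> w i) \<Longrightarrow> j \<in> R \<Longrightarrow> P v j \<le> P w j"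
  unfolding Pop_def by (intro sum_mono mult_left_mono Astar_nonneg) auto

lemma Pop_bound: assumes "\<And>i. i \<in> R \<Longrightarrow> \<bar>v i\<bar> \<le> c" "j \<in> R" shows "\<bar>P v j\<bar> \<le> c"
proof -
  have "P v j \<le> P (\<lambda>_. c) j" using assms by (intro Pop_mono) (auto simp: abs_le_iff)
  moreover have "\<And>i. i \<in> R \<Longrightarrow> - c \<le> v i" using assms(1) by (metis abs_le_iff minus_le_iff)
  then have "P (\<lambda>i. - c) j \<le> P v j" using assms by (intro Pop_mono) auto
  ultimately show ?thesis using Pop_const[OF assms(2)] by (simp add: abs_le_iff)
qed

lemma pi_Pop: "(\<Sum>j\<in>R. \<pi> j * P v j) = (\<Sum>j\<in>R. \<pi> j * v j)"
proof -
  have "(\<Sum>j\<in>R. \<pi> j * P v j) = (\<Sum>i\<in>R. (\<Sum>j\<in>R. \<pi> j * Astar A j i) * v i)"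
    unfolding Pop_def by (simp add: sum_distrib_left sum_distrib_right mult.assoc) (rule sum.swap)
  also have "\<dots> = (\<Sum>i\<in>R. \<pi> i * v i)" using pi_stat by simp
  finally show ?thesis .
qed

lemma it_Suc: "(P ^^ Suc n) v = P ((P ^^ n) v)" by simp

lemma it_lin: "(P ^^ n) (\<lambda>i. a * v i + b * w i) j = a * (P ^^ n) v j + b * (P ^^ n) w j"
proof (induction n arbitrary: j)
  case (Suc n)
  have e: "(P ^^ n) (\<lambda>i. a * v i + b * w i) = (\<lambda>i. a * (P ^^ n) v i + b * (P ^^ n) w i)"
    by (rule ext) (rule Suc.IH)
  have "(P ^^ Suc n) (\<lambda>i. a * v i + b * w i) j = P (\<lambda>i. a * (P ^^ n) v i + b * (P ^^ n) w i) j"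
    unfolding it_Suc e ..
  also have "\<dots> = a * (P ^^ Suc n) v j + b * (P ^^ Suc n) w j" by (simp add: Pop_lin)
  finally show ?case .
qed simp

lemma it_const: "j \<in> R \<Longrightarrow> (P ^^ n) (\<lambda>_. c) j = c"
proof (induction n arbitrary: j)
  case (Suc n)
  have "(P ^^ Suc n) (\<lambda>_. c) j = P (\<lambda>_. c) j" unfolding it_Suc by (rule Pop_cong) (use Suc.IH in auto)
  then show ?case using Pop_const[OF Suc.prems] by simp
qed simp

lemma it_mono: "(\<And>i. i \<in> R \<Longrightarrow> v i \<le> w i) \<Longrightarrow> j \<in> R \<Longrightarrow> (P ^^ n) v j \<le> (P ^^ n) w j"
proof (induction n arbitrary: j)
  case (Suc n)
  then show ?case unfolding it_Suc by (intro Pop_mono) auto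
qed simp

lemma it_bound: "(\<And>i. i \<in> R \<Longrightarrow> \<bar>v i\<bar> \<le> c) \<Longrightarrow> j \<in> R \<Longrightarrow> \<bar>(P ^^ n) v j\<bar> \<le> c"
proof (induction n arbitrary: j)
  case (Suc n)
  then show ?case unfolding it_Suc by (intro Pop_bound) auto
qed simp

lemma pi_it: "(\<Sum>j\<in>R. \<pi> j * (P ^^ n) v j) = (\<Sum>j\<in>R. \<pi> j * v j)"
proof (induction n)
  case (Suc n)
  then show ?case using pi_Pop[of "(P ^^ n) v"] by simp
qed simp

end

definition ind :: "nat \<Rightarrow> nat \<Rightarrow> real" where "ind k i = (if i = k then 1 else 0)"

context bg begin

lemma nstep_le: "j \<in> R \<Longrightarrow> nstep s0 A n (x1,x2,j) y' \<le> (P ^^ n) (ind (snd (snd y'))) j"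
proof (induction n arbitrary: x1 x2 j)
  case 0
  then show ?case by (cases y') (auto simp: ind_def)
next
  case (Suc n)
  have "nstep s0 A (Suc n) (x1,x2,j) y' = (\<Sum>k\<in>{-1,0,1}. \<Sum>l\<in>{-1,0,1}. \<Sum>j'\<in>R. A k l j j' * nstep s0 A n (x1+k,x2+l,j') y')"
    using sum_nbrs[OF Suc.prems, of A x1 x2 "\<lambda>z. nstep s0 A n z y'"] by simp
  also have "\<dots> \<le> (\<Sum>k\<in>{-1,0,1}. \<Sum>l\<in>{-1,0,1}. \<Sum>j'\<in>R. A k l j j' * (P ^^ n) (ind (snd (snd y'))) j')"
    by (intro sum_mono mult_left_mono Suc.IH A_nonneg) (use Suc.prems in auto)
  also have "\<dots> = P ((P ^^ n) (ind (snd (snd y')))) j"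
    unfolding sum_swap3 Pop_def ..
  finally show ?case by simp
qed

lemma bg_irred: "j \<in> R \<Longrightarrow> k \<in> R \<Longrightarrow> \<exists>n. 0 < (P ^^ n) (ind k) j"
proof -
  assume j: "j \<in> R" and k: "k \<in> R"
  have "(0::int,0::int,j) \<in> S_all s0" "(0::int,0::int,k) \<in> S_all s0" using j k by (auto simp: S_all_def)
  then obtain n where "nstep s0 A n (0,0,j) (0,0,k) > 0" using irred unfolding irreducible_chain_def by blast
  with nstep_le[OF j, of n 0 0 "(0,0,k)"] have "0 < (P ^^ n) (ind k) j" by simp
  then show ?thesis by blast
qed

lemma exists_N_delta: "\<exists>N \<delta> nn. \<delta> > 0 \<and> (\<forall>j\<in>R. \<forall>k\<in>R. nn j k \<le> N \<and> \<delta> \<le> (P ^^ (nn j k)) (ind k) j)"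
proof -
  have "\<forall>jk\<in>R\<times>R. \<exists>n. 0 < (P ^^ n) (ind (snd jk)) (fst jk)" using bg_irred by auto
  then obtain f where f: "\<forall>jk\<in>R\<times>R. 0 < (P ^^ f jk) (ind (snd jk)) (fst jk)" by (metis bchoice)
  define N where "N = Max (f ` (R\<times>R))"
  define \<delta> where "\<delta> = Min ((\<lambda>jk. (P ^^ f jk) (ind (snd jk)) (fst jk)) ` (R\<times>R))"
  have ne: "R \<times> R \<noteq> {}" using s0_pos by auto
  have "\<delta> > 0" unfolding \<delta>_def using ne f by (subst Min_gr_iff) auto
  moreover have "\<forall>j\<in>R. \<forall>k\<in>R. (\<lambda>j k. f (j,k)) j k \<le> N \<and> \<delta> \<le> (P ^^ ((\<lambda>j k. f (j,k)) j k)) (ind k) j"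
  proof (intro ballI conjI)
    fix j k assume "j \<in> R" "k \<in> R"
    then show "(\<lambda>j k. f (j,k)) j k \<le> N" unfolding N_def by (intro Max_ge) auto
    show "\<delta> \<le> (P ^^ ((\<lambda>j k. f (j,k)) j k)) (ind k) j" unfolding \<delta>_def
      using \<open>j \<in> R\<close> \<open>k \<in> R\<close> by (intro Min_le) (auto intro!: image_eqI[where x="(j,k)"])
  qed
  ultimately show ?thesis
    by (intro exI[of _ N] exI[of _ \<delta>] exI[of _ "\<lambda>j k. f (j,k)"]) simp
qed

lemma Pop_neg: "P (\<lambda>i. - v i) j = - P v j"
  using Pop_scale[of "-1" v j] by simp

lemma maxp:
  assumes dpos: "\<delta> > 0"
    and H: "\<forall>j\<in>R. \<forall>k\<in>R. nn j k \<le> N \<and> \<delta> \<le> (P ^^ (nn j k)) (ind k) j"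
    and u: "\<And>i. i \<in> R \<Longrightarrow> \<bar>u i - P u i\<bar> \<le> \<eta>"
    and pu: "(\<Sum>j\<in>R. \<pi> j * u j) = 0"
    and k: "k \<in> R"
  shows "- (N * \<eta> / \<delta>) \<le> u k"
proof -
  define M where "M = Max (u ` R)"
  have fin: "finite (u ` R)" and ne: "u ` R \<noteq> {}" using s0_pos by auto
  have Mge: "\<And>i. i \<in> R \<Longrightarrow> u i \<le> M" unfolding M_def by (intro Max_ge) auto
  obtain j0 where j0: "j0 \<in> R" "u j0 = M" using Max_in[OF fin ne] unfolding M_def by auto
  have M0: "0 \<le> M"
  proof (rule ccontr)
    assume "\<not> 0 \<le> M"
    have "(\<Sum>j\<in>R. \<pi> j * u j) \<le> (\<Sum>j\<in>R. \<pi> j * M)"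
      by (intro sum_mono mult_left_mono Mge pi_nonneg) auto
    also have "\<dots> = M" using pi_sum by (simp add: sum_distrib_right[symmetric])
    finally show False using pu \<open>\<not> 0 \<le> M\<close> by simp
  qed
  have eta: "0 \<le> \<eta>" using u[OF k] by linarith
  have itb: "\<And>i. i \<in> R \<Longrightarrow> \<bar>u i - (P ^^ n) u i\<bar> \<le> n * \<eta>" for n
  proof (induction n)
    case (Suc n)
    have "u i - (P ^^ Suc n) u i = (u i - P u i) + P (\<lambda>t. u t - (P ^^ n) u t) i"
      by (simp add: Pop_diff)
    moreover have "\<bar>P (\<lambda>t. u t - (P ^^ n) u t) i\<bar> \<le> n * \<eta>"
      by (rule Pop_bound) (use Suc in auto)
    ultimately show ?case using u[OF Suc.prems] by (simp add: algebra_simps)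
  qed simp
  define n where "n = nn j0 k"
  define p where "p = (P ^^ n) (ind k) j0"
  have nN: "n \<le> N" and dp: "\<delta> \<le> p" using H j0 k unfolding n_def p_def by auto
  have "(P ^^ n) u j0 \<le> (P ^^ n) (\<lambda>i. M * 1 + (u k - M) * ind k i) j0"
    by (rule it_mono) (use Mge j0 in \<open>auto simp: ind_def\<close>)
  also have "\<dots> = M + (u k - M) * p"
    unfolding it_lin p_def using it_const[OF j0(1), of n 1] by simp
  finally have a: "(P ^^ n) u j0 \<le> M + (u k - M) * p" .
  have b: "u j0 - (P ^^ n) u j0 \<le> N * \<eta>"
    using itb[OF j0(1), of n] mult_right_mono[OF of_nat_mono[OF nN] eta] by linarith
  have c: "(M - u k) * p \<le> N * \<eta>" using a b j0 by (simp add: algebra_simps)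
  have "(M - u k) * \<delta> \<le> (M - u k) * p" using Mge[OF k] dp by (intro mult_left_mono) auto
  with c have "(M - u k) * \<delta> \<le> N * \<eta>" by linarith
  then have "M - u k \<le> N * \<eta> / \<delta>" using dpos by (simp add: pos_le_divide_eq)
  then show ?thesis using M0 by linarith
qed

lemma maxp_abs:
  assumes dpos: "\<delta> > 0"
    and H: "\<forall>j\<in>R. \<forall>k\<in>R. nn j k \<le> N \<and> \<delta> \<le> (P ^^ (nn j k)) (ind k) j"
    and u: "\<And>i. i \<in> R \<Longrightarrow> \<bar>u i - P u i\<bar> \<le> \<eta>"
    and pu: "(\<Sum>j\<in>R. \<pi> j * u j) = 0"
    and k: "k \<in> R"
  shows "\<bar>u k\<bar> \<le> N * \<eta> / \<delta>"
proof -
  have 1: "- (N * \<eta> / \<delta>) \<le> u k" by (rule maxp[OF dpos H u pu k])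
  have u': "\<bar>- u i - P (\<lambda>i. - u i) i\<bar> \<le> \<eta>" if "i \<in> R" for i
    using u[OF that] by (simp add: Pop_neg)
  have pu': "(\<Sum>j\<in>R. \<pi> j * - u j) = 0" using pu by (simp add: sum_negf)
  have 2: "- (N * \<eta> / \<delta>) \<le> - u k" by (rule maxp[OF dpos H u' pu' k])
  from 1 2 show ?thesis by linarith
qed

end

context bg begin

lemma poisson:
  assumes g0: "(\<Sum>j\<in>R. \<pi> j * g j) = 0" and eps: "\<epsilon> > 0"
  shows "\<exists>h. \<forall>j\<in>R. P h j - h j \<le> \<epsilon> - g j"
proof -
  obtain N \<delta> nn where dpos: "\<delta> > 0" and H: "\<forall>j\<in>R. \<forall>k\<in>R. nn j k \<le> N \<and> \<delta> \<le> (P ^^ (nn j k)) (ind k) j"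
    using exists_N_delta by blast
  define G where "G = (\<Sum>i\<in>R. \<bar>g i\<bar>)"
  have gG: "\<And>i. i \<in> R \<Longrightarrow> \<bar>g i\<bar> \<le> G" unfolding G_def by (rule member_le_sum) auto
  have G0: "0 \<le> G" unfolding G_def by (simp add: sum_nonneg)
  obtain n0 :: nat where n0: "2 * N * G / (\<delta> * \<epsilon>) < n0" using reals_Archimedean2 by blast
  define m :: nat where "m = Suc n0"
  have mpos: "real m > 0" unfolding m_def by simp
  have "2 * N * G < n0 * (\<delta> * \<epsilon>)" using n0 dpos eps by (simp add: pos_divide_less_eq)
  also have "\<dots> \<le> m * (\<delta> * \<epsilon>)" unfolding m_def using dpos eps by (intro mult_right_mono) auto
  finally have mbig: "2 * N * G \<le> m * (\<delta> * \<epsilon>)" by simp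
  have mbound: "N * (2 * G / m) / \<delta> \<le> \<epsilon>"
    using mbig mpos dpos by (simp add: field_simps)
  define S where "S k = (\<lambda>j. \<Sum>n<k. (P ^^ n) g j)" for k
  have PS: "S k j - P (S k) j = g j - (P ^^ k) g j" for k j
  proof -
    have "P (S k) j = (\<Sum>n<k. (P ^^ Suc n) g j)" unfolding S_def Pop_sum by simp
    then have "S k j - P (S k) j = (\<Sum>n<k. (P ^^ n) g j - (P ^^ Suc n) g j)"
      unfolding S_def by (simp add: sum_subtractf)
    also have "\<dots> = g j - (P ^^ k) g j" by (subst sum_lessThan_telescope') simp
    finally show ?thesis .
  qed
  define u where "u = (\<lambda>j. (1 / m) * S m j)"
  have uPu: "u j - P u j = (1 / m) * (g j - (P ^^ m) g j)" for j
    unfolding u_def Pop_scale PS[symmetric] by (simp add: algebra_simps)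
  have ub: "\<bar>u i - P u i\<bar> \<le> 2 * G / m" if "i \<in> R" for i
  proof -
    have "\<bar>g i - (P ^^ m) g i\<bar> \<le> 2 * G" using gG[OF that] it_bound[where v=g and c=G and j=i and n=m, OF gG that] by linarith
    then show ?thesis unfolding uPu using mpos by (simp add: abs_mult field_simps)
  qed
  have pu: "(\<Sum>j\<in>R. \<pi> j * u j) = 0"
  proof -
    have "(\<Sum>j\<in>R. \<pi> j * u j) = (1 / m) * (\<Sum>n<m. \<Sum>j\<in>R. \<pi> j * (P ^^ n) g j)"
      unfolding u_def S_def by (simp add: sum_distrib_left mult.left_commute) (rule sum.swap)
    also have "\<dots> = 0" unfolding pi_it g0 by simp
    finally show ?thesis .
  qed
  have uabs: "\<bar>u j\<bar> \<le> \<epsilon>" if "j \<in> R" for j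
    using maxp_abs[OF dpos H ub pu that] mbound by linarith
  define h where "h = (\<lambda>j. (1 / m) * (\<Sum>k<m. S k j))"
  have "h j - P h j = g j - u j" for j
  proof -
    have "h j - P h j = (1 / m) * (\<Sum>k<m. S k j - P (S k) j)"
      unfolding h_def Pop_scale Pop_sum by (simp add: sum_subtractf algebra_simps)
    also have "\<dots> = (1 / m) * (\<Sum>k<m. g j - (P ^^ k) g j)" unfolding PS ..
    also have "\<dots> = g j - u j" unfolding u_def S_def using mpos by (simp add: sum_subtractf field_simps)
    finally show ?thesis .
  qed
  then have "\<forall>j\<in>R. P h j - h j \<le> \<epsilon> - g j" using uabs by (smt (verit))
  then show ?thesis by blast
qed

end

context bg begin

lemma generic:
  fixes w :: "int \<Rightarrow> int \<Rightarrow> int" and cz :: "state \<Rightarrow> int"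
  assumes cz_shift: "\<And>x1 x2 j k l j'. cz (x1+k, x2+l, j') = cz (x1,x2,j) + w k l"
    and w_ge: "\<And>k l. k \<in> {-1,0,1} \<Longrightarrow> l \<in> {-1,0,1} \<Longrightarrow> -1 \<le> w k l"
    and cz_nn: "\<And>y. y \<in> S_plus s0 \<Longrightarrow> 0 \<le> cz y"
    and neg: "(\<Sum>j\<in>R. \<pi> j * (\<Sum>k\<in>{-1,0,1}. \<Sum>l\<in>{-1,0,1}. \<Sum>j'\<in>R. A k l j j' * of_int (w k l))) < 0"
    and y: "y \<in> S_plus s0"
  shows "(\<Sum>\<^sub>\<infinity>y'\<in>S_plus s0. qtilde s0 A y y') < \<infinity>"
proof -
  define d where "d j = (\<Sum>k\<in>{-1,0,1}. \<Sum>l\<in>{-1,0,1}. \<Sum>j'\<in>R. A k l j j' * of_int (w k l))" for j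
  define a where "a = (\<Sum>j\<in>R. \<pi> j * d j)"
  have aneg: "a < 0" using neg unfolding a_def d_def .
  define g where "g j = d j - a" for j
  have g0: "(\<Sum>j\<in>R. \<pi> j * g j) = 0"
    unfolding g_def right_diff_distrib sum_subtractf a_def[symmetric]
    using pi_sum by (simp add: sum_distrib_right[symmetric])
  define e where "e = - a / 2"
  have epos: "e > 0" using aneg unfolding e_def by simp
  obtain h where h: "\<And>j. j \<in> R \<Longrightarrow> P h j - h j \<le> e - g j" using poisson[OF g0 epos] by blast
  define K where "K = (\<Sum>i\<in>R. \<bar>h i\<bar>)"
  have hK: "\<And>i. i \<in> R \<Longrightarrow> - K \<le> h i"
  proof -
    fix i assume "i \<in> R"
    then have "\<bar>h i\<bar> \<le> K" unfolding K_def by (intro member_le_sum) auto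
    then show "- K \<le> h i" by linarith
  qed
  define f where "f z = real_of_int (cz z) + 1 + K + h (snd (snd z))" for z
  have fnn: "0 \<le> f z" if "z \<in> S_plus s0" for z
  proof -
    obtain x1 x2 j where z: "z = (x1,x2,j)" by (cases z) auto
    have "j \<in> R" using that z by (auto simp: S_plus_def)
    then show ?thesis using hK[of j] cz_nn[OF that] unfolding f_def z by simp
  qed
  have dr: "e + (\<Sum>z\<in>nbrs s0 y \<inter> S_plus s0. trans s0 A y z * f z) \<le> f y" if yS: "y \<in> S_plus s0" for y
  proof -
    obtain x1 x2 j where yy: "y = (x1,x2,j)" by (cases y) auto
    have j: "j \<in> R" using yS yy by (auto simp: S_plus_def)
    have cy: "0 \<le> cz y" by (rule cz_nn[OF yS])
    let ?C = "real_of_int (cz y) + 1 + K"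
    have "(\<Sum>z\<in>nbrs s0 y \<inter> S_plus s0. trans s0 A y z * f z)
        = (\<Sum>z\<in>nbrs s0 y. trans s0 A y z * (if z \<in> S_plus s0 then f z else 0))"
      by (subst sum.inter_restrict[OF finite_nbrs]) (auto intro: sum.cong)
    also have "\<dots> = (\<Sum>k\<in>{-1,0,1}. \<Sum>l\<in>{-1,0,1}. \<Sum>j'\<in>R. A k l j j' *
          (if (x1+k,x2+l,j') \<in> S_plus s0 then f (x1+k,x2+l,j') else 0))"
      unfolding yy by (rule sum_nbrs[OF j])
    also have "\<dots> \<le> (\<Sum>k\<in>{-1,0,1}. \<Sum>l\<in>{-1,0,1}. \<Sum>j'\<in>R. A k l j j' * f (x1+k,x2+l,j'))"
    proof (intro sum_mono mult_left_mono)
      fix k l j' assume k: "k \<in> {-1,0,1::int}" and l: "l \<in> {-1,0,1::int}" and j': "j' \<in> R"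
      show "0 \<le> A k l j j'" using A_nonneg[OF k l j j'] .
      have "-1 \<le> w k l" using w_ge[OF k l] .
      moreover have "cz (x1+k,x2+l,j') = cz y + w k l" unfolding yy by (rule cz_shift)
      ultimately have "0 \<le> f (x1+k,x2+l,j')" using hK[OF j'] cy unfolding f_def by simp
      then show "(if (x1+k,x2+l,j') \<in> S_plus s0 then f (x1+k,x2+l,j') else 0) \<le> f (x1+k,x2+l,j')" by simp
    qed
    also have "\<dots> = (\<Sum>k\<in>{-1,0,1}. \<Sum>l\<in>{-1,0,1}. \<Sum>j'\<in>R. A k l j j' * ?C
          + A k l j j' * of_int (w k l) + A k l j j' * h j')"
    proof (intro sum.cong refl)
      fix k l j'
      have "cz (x1+k,x2+l,j') = cz y + w k l" unfolding yy by (rule cz_shift)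
      then show "A k l j j' * f (x1+k,x2+l,j') = A k l j j' * ?C + A k l j j' * of_int (w k l) + A k l j j' * h j'"
        unfolding f_def by (simp add: algebra_simps)
    qed
    also have "\<dots> = (\<Sum>k\<in>{-1,0,1}. \<Sum>l\<in>{-1,0,1}. \<Sum>j'\<in>R. A k l j j' * ?C) + d j
          + (\<Sum>k\<in>{-1,0,1}. \<Sum>l\<in>{-1,0,1}. \<Sum>j'\<in>R. A k l j j' * h j')"
      unfolding d_def by (simp only: sum.distrib)
    also have "\<dots> = ?C + d j + P h j"
    proof -
      have "(\<Sum>k\<in>{-1,0,1}. \<Sum>l\<in>{-1,0,1}. \<Sum>j'\<in>R. A k l j j' * ?C) = (\<Sum>j'\<in>R. Astar A j j' * ?C)"
        using sum_swap3[where A=A and j=j and X="\<lambda>_. ?C"] by simp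
      also have "\<dots> = ?C" using A_stoch[OF j] by (simp add: sum_distrib_right[symmetric])
      finally show ?thesis unfolding sum_swap3 Pop_def by simp
    qed
    also have "\<dots> \<le> ?C + d j + h j + e - g j" using h[OF j] by simp
    also have "\<dots> = f y - e" unfolding f_def g_def e_def yy by simp
    finally show ?thesis by simp
  qed
  show ?thesis
    by (rule occupation_finite[OF _ epos dr fnn y]) (rule trans_nonneg[OF A_nonneg])
qed

end

theorem proposition2p1:
  fixes s0 :: nat and A :: "int \<Rightarrow> int \<Rightarrow> nat \<Rightarrow> nat \<Rightarrow> real" and \<pi> :: "nat \<Rightarrow> real"
    and y :: state
  assumes s0_pos: "1 \<le> s0"
    and A_nonneg: "\<And>k l j j'. k \<in> {-1,0,1} \<Longrightarrow> l \<in> {-1,0,1} \<Longrightarrow> j \<in> {1..s0} \<Longrightarrow>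
                     j' \<in> {1..s0} \<Longrightarrow> 0 \<le> A k l j j'"
    and A_stoch: "\<And>j. j \<in> {1..s0} \<Longrightarrow> (\<Sum>j'\<in>{1..s0}. Astar A j j') = 1"
    and pi_nonneg: "\<And>j. j \<in> {1..s0} \<Longrightarrow> 0 \<le> \<pi> j"
    and pi_sum: "(\<Sum>j\<in>{1..s0}. \<pi> j) = 1"
    and pi_stat: "\<And>j'. j' \<in> {1..s0} \<Longrightarrow> (\<Sum>j\<in>{1..s0}. \<pi> j * Astar A j j') = \<pi> j'"
    and irred: "irreducible_chain s0 A"
    and aper: "aperiodic_chain s0 A"
    and drift: "drift1 s0 A \<pi> < 0 \<or> drift2 s0 A \<pi> < 0"
    and y_in: "y \<in> S_plus s0"
  shows "(\<Sum>\<^sub>\<infinity>y'\<in>S_plus s0. qtilde s0 A y y') < \<infinity>"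
proof -
  interpret bg s0 A \<pi>
    by (rule bg.intro; fact)
  show ?thesis
  proof (cases "drift1 s0 A \<pi> < 0")
    case True
    have eq: "(\<Sum>j'\<in>{1..s0}. \<Sum>l\<in>{-1,0,1}. A 1 l j j' - A (-1) l j j') =
       (\<Sum>k\<in>{-1,0,1::int}. \<Sum>l\<in>{-1,0,1::int}. \<Sum>j'\<in>{1..s0}. A k l j j' * of_int k)" for j
      by (simp add: sum.distrib sum_subtractf sum_negf)
    show ?thesis
    proof (rule generic[where w="\<lambda>k l. k" and cz="\<lambda>(x1,x2,j). x1"])
      show "(\<Sum>j\<in>{1..s0}. \<pi> j * (\<Sum>k\<in>{-1,0,1}. \<Sum>l\<in>{-1,0,1}. \<Sum>j'\<in>{1..s0}. A k l j j' * of_int k)) < 0"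
        using True unfolding drift1_def eq .
    qed (use y_in in \<open>auto simp: S_plus_def\<close>)
  next
    case False
    then have F: "drift2 s0 A \<pi> < 0" using drift by simp
    have eq: "(\<Sum>j'\<in>{1..s0}. \<Sum>k\<in>{-1,0,1}. A k 1 j j' - A k (-1) j j') =
       (\<Sum>k\<in>{-1,0,1::int}. \<Sum>l\<in>{-1,0,1::int}. \<Sum>j'\<in>{1..s0}. A k l j j' * of_int l)" for j
      by (simp add: sum.distrib sum_subtractf sum_negf)
    show ?thesis
    proof (rule generic[where w="\<lambda>k l. l" and cz="\<lambda>(x1,x2,j). x2"])
      show "(\<Sum>j\<in>{1..s0}. \<pi> j * (\<Sum>k\<in>{-1,0,1}. \<Sum>l\<in>{-1,0,1}. \<Sum>j'\<in>{1..s0}. A k l j j' * of_int l)) < 0"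
        using F unfolding drift2_def eq .
    qed (use y_in in \<open>auto simp: S_plus_def\<close>)
  qed
qed

end
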